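(* Fix an agent $P_i$ and a stage $k$, and let $\mathcal A'$ be the (finite, nonempty) set of arms still available to $P_i$ at stage $k$. Each arm $A_j\in\mathcal A'$ has a score $v_j\in[0,1]$ and a fit $e_{ij}\in[0,1]$. Fix the state $s=s_{i,k}$, which is assumed to be the true state, and write $\pi_j:=\pi_{i,k}(s,v_j)$ and $\delta_j:=\delta_{i,k}(v_j)$. Let $\eta=\eta_{i,k}\ge 0$, let $\gamma=\gamma_i>\max_{j\in\mathcal A'}(v_j+e_{ij})$, and let $Q:=q_i-c$, where $q_i\ge1$ is the quota of $P_i$ and $c\ge 0$ is the number of arms that accepted $P_i$ at earlier stages. Assume $\pi_j>0$, $\eta\delta_j<\pi_j$ and $v_j+e_{ij}>0$ for all $j\in\mathcal A'$, and $0<Q<\sum_{j\in\mathcal A'}\pi_j$. For $\mathcal B\subseteq\mathcal A'$ define the loss $$\mathcal L^\dagger[\mathcal B]=\sum_{j\in\mathcal B}(v_j+e_{ij})\big[\eta\delta_j-\pi_j\big]+\gamma\max\Big\{\sum_{j\in\mathcal B}\pi_j-Q,\;0\Big\}.$$ Let $r_j:=(v_j+e_{ij})(\pi_j-\eta\delta_j)/\pi_j>0$, and for $b\ge0$ let $S(b):=\{j\in\mathcal A': r_j\ge b\}$ and $\Pi(b):=\sum_{j\in S(b)}\pi_j$. Define the greedy set $\widehat{\mathcal B}$ as follows. (i) If $\Pi(b)=Q$ for some $b\ge0$, set $\widehat{\mathcal B}:=S(b)$ and $\mathrm{UE}^\dagger:=0$. (ii) Otherwise let $\mathcal B^+:=\bigcap_{b\ge0:\,\Pi(b)>Q}S(b)$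 and $\mathcal B^-:=\bigcup_{b\ge0:\,\Pi(b)<Q}S(b)$. Set $\widehat{\mathcal B}:=\mathcal B^+$ if $$\sum_{j\in\mathcal B^+\setminus\mathcal B^-}(v_j+e_{ij})(\pi_j-\eta\delta_j)\;\ge\;\gamma\sum_{j\in\mathcal B^+}\pi_j-\gamma Q,$$ and $\widehat{\mathcal B}:=\mathcal B^-$ otherwise; and set $$\mathrm{UE}^\dagger:=\Big[\min_{j\in\mathcal B^-}r_j\Big]\cdot\Big[Q-\sum_{j\in\mathcal B^-}\pi_j\Big],$$ where, if $\mathcal B^-=\emptyset$, the minimum is interpreted as $\max_{j\in\mathcal A'}r_j$. Then $\mathrm{UE}^\dagger\ge0$ and $$\min_{\mathcal B\subseteq\mathcal A'}\mathcal L^\dagger[\mathcal B]\;\le\;\mathcal L^\dagger[\widehat{\mathcal B}]\;\le\;\min_{\mathcal B\subseteq\mathcal A'}\mathcal L^\dagger[\mathcal B]+\mathrm{UE}^\dagger.$$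
   Context: Model: agents $P_1,\dots,P_m$ with quotas $q_i$ pull arms $A_1,\dots,A_n$ over stages. Agent $P_i$'s latent utility for arm $A_j$ is $v_j+e_{ij}$, where $v_j\in[0,1]$ is a score common to all agents and $e_{ij}\in[0,1]$ an agent-specific fit. For a state parameter $s\in[0,1]$, $\pi_{i,k}(s,v)\in[0,1]$ denotes the probability that an arm of score $v$ accepts $P_i$ at stage $k$; it is continuous and strictly increasing in $s$. The uncertainty measure is $\delta_{i,k}(v):=\tfrac12\big[\max_{s\in[0,1]}\pi_{i,k}(s,v)-\min_{s\in[0,1]}\pi_{i,k}(s,v)\big]$. The parameter $\eta_{i,k}\ge0$ is a regularization parameter penalizing uncertainty, and $\gamma_i$ is the marginal penalty for exceeding the quota. *)

theory Defs
  imports "HOL-Analysis.Analysis"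
begin

text \<open>Uncertainty measure: half the range of the acceptance probability over states s in [0,1].
  The first argument of P is the state s, the second the score v.\<close>
definition delta :: "(real \<Rightarrow> real \<Rightarrow> real) \<Rightarrow> real \<Rightarrow> real" where
  "delta P v = (Sup ((\<lambda>s. P s v) ` {0..1}) - Inf ((\<lambda>s. P s v) ` {0..1})) / 2"

text \<open>Loss L-dagger of a set B; u j = v j + e_ij, p j = pi_j, d j = delta_j.\<close>
definition loss :: "('a \<Rightarrow> real) \<Rightarrow> ('a \<Rightarrow> real) \<Rightarrow> ('a \<Rightarrow> real) \<Rightarrow> real \<Rightarrow> real \<Rightarrow> real
    \<Rightarrow> 'a set \<Rightarrow> real" where
  "loss u p d \<eta> \<gamma> Q B =
     (\<Sum>j\<in>B. u j * (\<eta> * d j - p j)) + \<gamma> * max ((\<Sum>j\<in>B. p j) - Q) 0"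

definition ratio :: "('a \<Rightarrow> real) \<Rightarrow> ('a \<Rightarrow> real) \<Rightarrow> ('a \<Rightarrow> real) \<Rightarrow> real \<Rightarrow> 'a \<Rightarrow> real" where
  "ratio u p d \<eta> j = u j * (p j - \<eta> * d j) / p j"

definition Sset :: "'a set \<Rightarrow> ('a \<Rightarrow> real) \<Rightarrow> real \<Rightarrow> 'a set" where
  "Sset A r b = {j \<in> A. r j \<ge> b}"

definition PiS :: "'a set \<Rightarrow> ('a \<Rightarrow> real) \<Rightarrow> ('a \<Rightarrow> real) \<Rightarrow> real \<Rightarrow> real" where
  "PiS A r p b = (\<Sum>j\<in>Sset A r b. p j)"

definition Bplus :: "'a set \<Rightarrow> ('a \<Rightarrow> real) \<Rightarrow> ('a \<Rightarrow> real) \<Rightarrow> real \<Rightarrow> 'a set" where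
  "Bplus A r p Q = \<Inter> {Sset A r b | b. b \<ge> 0 \<and> PiS A r p b > Q}"

definition Bminus :: "'a set \<Rightarrow> ('a \<Rightarrow> real) \<Rightarrow> ('a \<Rightarrow> real) \<Rightarrow> real \<Rightarrow> 'a set" where
  "Bminus A r p Q = \<Union> {Sset A r b | b. b \<ge> 0 \<and> PiS A r p b < Q}"

definition greedy :: "'a set \<Rightarrow> ('a \<Rightarrow> real) \<Rightarrow> ('a \<Rightarrow> real) \<Rightarrow> ('a \<Rightarrow> real) \<Rightarrow> real \<Rightarrow> real
    \<Rightarrow> real \<Rightarrow> 'a set" where
  "greedy A u p d \<eta> \<gamma> Q =
     (let r = ratio u p d \<eta>; Bp = Bplus A r p Q; Bm = Bminus A r p Q in
      if \<exists>b\<ge>0. PiS A r p b = Q then Sset A r (SOME b. b \<ge> 0 \<and> PiS A r p b = Q)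
      else if (\<Sum>j\<in>Bp - Bm. u j * (p j - \<eta> * d j)) \<ge> \<gamma> * (\<Sum>j\<in>Bp. p j) - \<gamma> * Q
      then Bp else Bm)"

definition UE :: "'a set \<Rightarrow> ('a \<Rightarrow> real) \<Rightarrow> ('a \<Rightarrow> real) \<Rightarrow> ('a \<Rightarrow> real) \<Rightarrow> real
    \<Rightarrow> real \<Rightarrow> real" where
  "UE A u p d \<eta> Q =
     (let r = ratio u p d \<eta>; Bm = Bminus A r p Q in
      if \<exists>b\<ge>0. PiS A r p b = Q then 0
      else (if Bm = {} then Max (r ` A) else Min (r ` Bm)) * (Q - (\<Sum>j\<in>Bm. p j)))"

end

theory Submission
  imports Defs
begin

lemma key:
  fixes A B S :: "'a set" and r p :: "'a \<Rightarrow> real"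
  assumes "finite A" "B \<subseteq> A" "S \<subseteq> A" "0 \<le> \<rho>" "\<rho> \<le> \<gamma>"
    "\<forall>j\<in>S. \<rho> \<le> r j" "\<forall>j\<in>A-S. r j \<le> \<rho>" "\<forall>j\<in>A. 0 < p j"
  shows "-(\<Sum>j\<in>S. r j * p j) - \<rho> * (Q - (\<Sum>j\<in>S. p j))
     \<le> -(\<Sum>j\<in>B. r j * p j) + \<gamma> * max ((\<Sum>j\<in>B. p j) - Q) 0"
proof -
  have fB: "finite B" and fS: "finite S" using assms finite_subset by blast+
  have b1: "(\<Sum>j\<in>B. r j * p j) = (\<Sum>j\<in>B\<inter>S. r j * p j) + (\<Sum>j\<in>B-S. r j * p j)"
    by (simp add: fB sum.Int_Diff)
  have b2: "(\<Sum>j\<in>S. r j * p j) = (\<Sum>j\<in>S\<inter>B. r j * p j) + (\<Sum>j\<in>S-B. r j * p j)"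
    by (simp add: fS sum.Int_Diff)
  have b3: "(\<Sum>j\<in>B. p j) = (\<Sum>j\<in>B\<inter>S. p j) + (\<Sum>j\<in>B-S. p j)"
    by (simp add: fB sum.Int_Diff)
  have b4: "(\<Sum>j\<in>S. p j) = (\<Sum>j\<in>S\<inter>B. p j) + (\<Sum>j\<in>S-B. p j)"
    by (simp add: fS sum.Int_Diff)
  have c: "B \<inter> S = S \<inter> B" by blast
  have m1: "(\<Sum>j\<in>B-S. r j * p j) \<le> (\<Sum>j\<in>B-S. \<rho> * p j)"
  proof (rule sum_mono)
    fix j assume "j \<in> B - S"
    then have "r j \<le> \<rho>" "0 < p j" using assms by auto
    then show "r j * p j \<le> \<rho> * p j" by (simp add: mult_right_mono)
  qed
  have m2: "(\<Sum>j\<in>S-B. \<rho> * p j) \<le> (\<Sum>j\<in>S-B. r j * p j)"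
  proof (rule sum_mono)
    fix j assume "j \<in> S - B"
    then have "\<rho> \<le> r j" "0 < p j" using assms by auto
    then show "\<rho> * p j \<le> r j * p j" by (simp add: mult_right_mono)
  qed
  have s1: "(\<Sum>j\<in>B-S. \<rho> * p j) = \<rho> * (\<Sum>j\<in>B-S. p j)" by (simp add: sum_distrib_left)
  have s2: "(\<Sum>j\<in>S-B. \<rho> * p j) = \<rho> * (\<Sum>j\<in>S-B. p j)" by (simp add: sum_distrib_left)
  have g: "\<rho> * ((\<Sum>j\<in>B. p j) - Q) \<le> \<gamma> * max ((\<Sum>j\<in>B. p j) - Q) 0"
  proof (cases "(\<Sum>j\<in>B. p j) - Q \<ge> 0")
    case True
    then show ?thesis using assms(5) by (simp add: mult_right_mono)
  next
    case False
    then show ?thesis using assms(4,5) by (simp add: mult_nonneg_nonpos)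
  qed
  show ?thesis using b1 b2 b3 b4 c m1 m2 s1 s2 g by (simp add: algebra_simps)
qed

lemma main:
  fixes A :: "'a set" and u p d :: "'a \<Rightarrow> real" and \<eta> \<gamma> Q :: real
  assumes fin: "finite A" and ne: "A \<noteq> {}"
    and pp: "\<forall>j\<in>A. p j > 0" and up: "\<forall>j\<in>A. u j > 0" and dp: "\<forall>j\<in>A. d j \<ge> 0"
    and ed: "\<forall>j\<in>A. \<eta> * d j < p j" and eta: "\<eta> \<ge> 0" and ug: "\<forall>j\<in>A. u j < \<gamma>"
    and Qp: "0 < Q" and QA: "Q < (\<Sum>j\<in>A. p j)"
  shows "UE A u p d \<eta> Q \<ge> 0 \<and> Min (loss u p d \<eta> \<gamma> Q ` Pow A) \<le> loss u p d \<eta> \<gamma> Q (greedy A u p d \<eta> \<gamma> Q)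
     \<and> loss u p d \<eta> \<gamma> Q (greedy A u p d \<eta> \<gamma> Q) \<le> Min (loss u p d \<eta> \<gamma> Q ` Pow A) + UE A u p d \<eta> Q"
proof -
  define r where "r = ratio u p d \<eta>"
  define L where "L = loss u p d \<eta> \<gamma> Q"
  define Bh where "Bh = greedy A u p d \<eta> \<gamma> Q"
  define E where "E = UE A u p d \<eta> Q"
  have rdef: "\<And>j. r j = u j * (p j - \<eta> * d j) / p j" by (simp add: r_def ratio_def)
  have rpos: "\<forall>j\<in>A. 0 < r j"
  proof
    fix j assume "j \<in> A"
    then have "u j > 0" "p j - \<eta> * d j > 0" "p j > 0" using up ed pp by auto
    then show "0 < r j" by (simp add: rdef)
  qed
  have rg: "\<forall>j\<in>A. r j < \<gamma>"
  proof
    fix j assume j: "j \<in> A"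
    then have h: "u j > 0" "p j - \<eta> * d j \<le> p j" "p j > 0" using up dp eta pp by auto
    then have "u j * (p j - \<eta> * d j) \<le> u j * p j" by (simp add: mult_left_mono)
    then have "r j \<le> u j" using h by (simp add: rdef divide_simps)
    then show "r j < \<gamma>" using ug j by force
  qed
  have Lr: "\<And>B. B \<subseteq> A \<Longrightarrow> L B = -(\<Sum>j\<in>B. r j * p j) + \<gamma> * max ((\<Sum>j\<in>B. p j) - Q) 0"
  proof -
    fix B assume B: "B \<subseteq> A"
    have "(\<Sum>j\<in>B. u j * (\<eta> * d j - p j)) = (\<Sum>j\<in>B. - (r j * p j))"
    proof (rule sum.cong)
      fix j assume "j \<in> B"
      then have "p j > 0" using B pp by auto
      then show "u j * (\<eta> * d j - p j) = - (r j * p j)" by (simp add: rdef field_simps)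
    qed simp
    then show "L B = -(\<Sum>j\<in>B. r j * p j) + \<gamma> * max ((\<Sum>j\<in>B. p j) - Q) 0"
      by (simp add: L_def loss_def sum_negf)
  qed
  have ppA: "\<forall>j\<in>A. 0 < p j" using pp by blast
  have SA: "\<And>b. Sset A r b \<subseteq> A" by (auto simp: Sset_def)
  have S0: "Sset A r 0 = A" using rpos by (auto simp: Sset_def less_imp_le)
  have suff: "E \<ge> 0 \<and> Bh \<subseteq> A \<and> (\<forall>B\<subseteq>A. L Bh \<le> L B + E)"
  proof (cases "\<exists>b\<ge>0. PiS A r p b = Q")
    case True
    define b where "b = (SOME b. b \<ge> 0 \<and> PiS A r p b = Q)"
    have bb: "b \<ge> 0 \<and> PiS A r p b = Q" unfolding b_def by (rule someI_ex) (use True in blast)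
    then have b: "b \<ge> 0" "PiS A r p b = Q" by auto
    have Bh: "Bh = Sset A r b"
      unfolding Bh_def greedy_def Let_def r_def[symmetric] b_def by (subst if_P[OF True]) (rule refl)
    have E0: "E = 0"
      unfolding E_def UE_def Let_def r_def[symmetric] by (subst if_P[OF True]) (rule refl)
    have sq: "(\<Sum>j\<in>Sset A r b. p j) = Q" using b by (simp add: PiS_def)
    then have "Sset A r b \<noteq> {}" using Qp by auto
    then obtain j where j: "j \<in> Sset A r b" by blast
    then have "b \<le> r j" "j \<in> A" by (auto simp: Sset_def)
    then have bg: "b \<le> \<gamma>" using rg by force
    have "\<forall>B\<subseteq>A. L Bh \<le> L B"
    proof (intro allI impI)
      fix B assume B: "B \<subseteq> A"
      have k: "-(\<Sum>j\<in>Sset A r b. r j * p j) - b * (Q - (\<Sum>j\<in>Sset A r b. p j))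
     \<le> -(\<Sum>j\<in>B. r j * p j) + \<gamma> * max ((\<Sum>j\<in>B. p j) - Q) 0"
        by (rule key[OF fin B SA b(1) bg _ _ ppA]) (auto simp: Sset_def)
      show "L Bh \<le> L B" using k Lr[OF B] Lr[OF SA[of b]] Bh sq by simp
    qed
    then show ?thesis using E0 Bh SA by simp
  next
    case False
    define Bm where "Bm = Bminus A r p Q"
    define Bp where "Bp = Bplus A r p Q"
    have Bh: "Bh = (if (\<Sum>j\<in>Bp - Bm. u j * (p j - \<eta> * d j)) \<ge> \<gamma> * (\<Sum>j\<in>Bp. p j) - \<gamma> * Q
      then Bp else Bm)" using False unfolding Bh_def greedy_def Let_def r_def Bm_def Bp_def by (simp del: not_ex)
    define m where "m = (if Bm = {} then Max (r ` A) else Min (r ` Bm))"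
    have E: "E = m * (Q - (\<Sum>j\<in>Bm. p j))"
      unfolding E_def UE_def Let_def r_def[symmetric] Bm_def[symmetric] m_def[symmetric] by (subst if_not_P[OF False]) (rule refl)
    have BmA: "Bm \<subseteq> A" unfolding Bm_def Bminus_def using SA by blast
    have P0: "PiS A r p 0 > Q" using QA S0 by (simp add: PiS_def)
    have BpA: "Bp \<subseteq> A" unfolding Bp_def Bplus_def using P0 S0 by blast
    have BmBp: "Bm \<subseteq> Bp"
    proof
      fix j assume "j \<in> Bm"
      then obtain b1 where b1: "b1 \<ge> 0" "PiS A r p b1 < Q" "j \<in> Sset A r b1"
        unfolding Bm_def Bminus_def by blast
      show "j \<in> Bp" unfolding Bp_def Bplus_def
      proof (rule InterI)
        fix X assume "X \<in> {Sset A r b |b. 0 \<le> b \<and> Q < PiS A r p b}"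
        then obtain b2 where b2: "X = Sset A r b2" "Q < PiS A r p b2" by blast
        have "b2 \<le> b1"
        proof (rule ccontr)
          assume "\<not> b2 \<le> b1"
          then have "Sset A r b2 \<subseteq> Sset A r b1" by (auto simp: Sset_def)
          then have "PiS A r p b2 \<le> PiS A r p b1" unfolding PiS_def
            by (rule sum_mono2[OF finite_subset[OF SA fin]]) (use pp in \<open>auto simp: Sset_def less_imp_le\<close>)
          then show False using b1 b2 by simp
        qed
        then show "j \<in> X" using b1 b2 by (auto simp: Sset_def)
      qed
    qed
    have finBm: "finite Bm" using BmA fin finite_subset by blast
    have mprop: "(\<forall>j\<in>Bm. m \<le> r j) \<and> (\<forall>j\<in>A-Bm. r j \<le> m) \<and> (\<exists>i\<in>A. m = r i) \<and> (\<Sum>j\<in>Bm. p j) < Q"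
    proof (cases "Bm = {}")
      case True
      have "Max (r ` A) \<in> r ` A" using fin ne by simp
      then show ?thesis using True Qp fin by (auto simp: m_def)
    next
      case nB: False
      have "Min (r ` Bm) \<in> r ` Bm" using finBm nB by simp
      then obtain i where i: "i \<in> Bm" "m = r i" using nB by (auto simp: m_def)
      then obtain b where b: "b \<ge> 0" "PiS A r p b < Q" "i \<in> Sset A r b"
        unfolding Bm_def Bminus_def by blast
      have mle: "\<forall>j\<in>Bm. m \<le> r j" using nB finBm by (simp add: m_def)
      have eq: "Bm = Sset A r b"
      proof
        show "Sset A r b \<subseteq> Bm" unfolding Bm_def Bminus_def using b by blast
        show "Bm \<subseteq> Sset A r b" using mle i b BmA by (force simp: Sset_def)
      qed
      have "\<forall>j\<in>A-Bm. r j \<le> m"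
      proof
        fix j assume j: "j \<in> A - Bm"
        show "r j \<le> m"
        proof (rule ccontr)
          assume "\<not> r j \<le> m"
          then have "j \<in> Sset A r b" using i b j by (auto simp: Sset_def)
          then show False using eq j by blast
        qed
      qed
      then show ?thesis using mle i BmA b eq by (auto simp: PiS_def)
    qed
    then obtain i where i: "i \<in> A" "m = r i" by blast
    have m0: "0 \<le> m" using i rpos by force
    have mg: "m \<le> \<gamma>" using i rg by force
    have E0: "E \<ge> 0" using E m0 mprop by simp
    have Lm: "L Bm = -(\<Sum>j\<in>Bm. r j * p j)" using Lr[OF BmA] mprop by simp
    have lb: "\<forall>B\<subseteq>A. L Bm \<le> L B + E"
    proof (intro allI impI)
      fix B assume B: "B \<subseteq> A"
      have k: "-(\<Sum>j\<in>Bm. r j * p j) - m * (Q - (\<Sum>j\<in>Bm. p j))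
     \<le> -(\<Sum>j\<in>B. r j * p j) + \<gamma> * max ((\<Sum>j\<in>B. p j) - Q) 0"
        by (rule key[OF fin B BmA m0 mg _ _ ppA]) (use mprop in auto)
      then show "L Bm \<le> L B + E" using Lm Lr[OF B] E by simp
    qed
    have pm: "L Bp \<le> L Bm" if c: "(\<Sum>j\<in>Bp - Bm. u j * (p j - \<eta> * d j)) \<ge> \<gamma> * (\<Sum>j\<in>Bp. p j) - \<gamma> * Q"
    proof -
      have w: "(\<Sum>j\<in>Bp - Bm. u j * (p j - \<eta> * d j)) = (\<Sum>j\<in>Bp - Bm. r j * p j)"
      proof (rule sum.cong)
        fix j assume "j \<in> Bp - Bm"
        then have "p j > 0" using BpA pp by auto
        then show "u j * (p j - \<eta> * d j) = r j * p j" by (simp add: rdef)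
      qed simp
      have finBp: "finite Bp" using BpA fin finite_subset by blast
      have sp: "(\<Sum>j\<in>Bp. r j * p j) = (\<Sum>j\<in>Bm. r j * p j) + (\<Sum>j\<in>Bp - Bm. r j * p j)"
        using sum.subset_diff[OF BmBp finBp, of "\<lambda>j. r j * p j"] by simp
      have nn: "(\<Sum>j\<in>Bp - Bm. r j * p j) \<ge> 0"
      proof (rule sum_nonneg)
        fix j assume "j \<in> Bp - Bm"
        then have "0 < r j" "0 < p j" using rpos pp BpA by auto
        then show "0 \<le> r j * p j" by simp
      qed
      show ?thesis
      proof (cases "(\<Sum>j\<in>Bp. p j) - Q \<ge> 0")
        case True
        then have mx: "max ((\<Sum>j\<in>Bp. p j) - Q) 0 = (\<Sum>j\<in>Bp. p j) - Q" by simp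
        have ge: "\<gamma> * ((\<Sum>j\<in>Bp. p j) - Q) = \<gamma> * (\<Sum>j\<in>Bp. p j) - \<gamma> * Q"
          by (simp add: right_diff_distrib)
        have Lp: "L Bp = -(\<Sum>j\<in>Bp. r j * p j) + (\<gamma> * (\<Sum>j\<in>Bp. p j) - \<gamma> * Q)"
          using Lr[OF BpA] unfolding mx ge .
        show ?thesis using Lp Lm sp c w by linarith
      next
        case False
        then have mx: "max ((\<Sum>j\<in>Bp. p j) - Q) 0 = 0" by simp
        have Lp: "L Bp = -(\<Sum>j\<in>Bp. r j * p j)" using Lr[OF BpA] unfolding mx by simp
        show ?thesis using Lp Lm sp nn by linarith
      qed
    qed
    have "L Bh \<le> L Bm"
    proof (cases "(\<Sum>j\<in>Bp - Bm. u j * (p j - \<eta> * d j)) \<ge> \<gamma> * (\<Sum>j\<in>Bp. p j) - \<gamma> * Q")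
      case True
      then show ?thesis using pm Bh by simp
    next
      case False
      then show ?thesis using Bh by simp
    qed
    then have "\<forall>B\<subseteq>A. L Bh \<le> L B + E" using lb by (meson order_trans)
    moreover have "Bh \<subseteq> A" using Bh BpA BmA by (simp split: if_split)
    ultimately show ?thesis using E0 by simp
  qed
  have finP: "finite (L ` Pow A)" using fin by (intro finite_imageI) simp
  have "L {} \<in> L ` Pow A" by (rule imageI) simp
  then have neP: "L ` Pow A \<noteq> {}" by (metis empty_iff)
  have "Min (L ` Pow A) \<in> L ` Pow A" by (rule Min_in[OF finP neP])
  then obtain B0 where B0: "B0 \<in> Pow A" "Min (L ` Pow A) = L B0" by (rule imageE)
  have 3: "E \<ge> 0" using suff by (rule conjunct1)
  have BhA': "Bh \<subseteq> A" using suff by simp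
  then have BhA: "Bh \<in> Pow A" by simp
  have all: "\<forall>B\<subseteq>A. L Bh \<le> L B + E" using suff by simp
  have 1: "Min (L ` Pow A) \<le> L Bh" by (rule Min_le[OF finP imageI[OF BhA]])
  have "B0 \<subseteq> A" using B0(1) by simp
  then have "L Bh \<le> L B0 + E" using all by simp
  then have 2: "L Bh \<le> Min (L ` Pow A) + E" using B0(2) by simp
  show ?thesis using 3 1 2 unfolding L_def Bh_def E_def by (intro conjI) assumption+
qed

theorem theorem2:
  fixes A :: "'a set" and v e :: "'a \<Rightarrow> real" and P :: "real \<Rightarrow> real \<Rightarrow> real"
    and s \<eta> \<gamma> :: real and q c :: nat
  assumes "finite A" and "A \<noteq> {}"
    and "\<forall>j\<in>A. v j \<in> {0..1} \<and> e j \<in> {0..1}"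
    and "\<forall>x\<in>{0..1}. continuous_on {0..1} (\<lambda>t. P t x)"
    and "\<forall>x\<in>{0..1}. strict_mono_on {0..1} (\<lambda>t. P t x)"
    and "\<forall>t\<in>{0..1}. \<forall>x\<in>{0..1}. P t x \<in> {0..1}"
    and "s \<in> {0..1}"
    and "\<eta> \<ge> 0"
    and "\<gamma> > Max ((\<lambda>j. v j + e j) ` A)"
    and "q \<ge> 1"
    and "\<forall>j\<in>A. P s (v j) > 0"
    and "\<forall>j\<in>A. \<eta> * delta P (v j) < P s (v j)"
    and "\<forall>j\<in>A. v j + e j > 0"
    and "0 < real q - real c"
    and "real q - real c < (\<Sum>j\<in>A. P s (v j))"
  shows "let u = (\<lambda>j. v j + e j); p = (\<lambda>j. P s (v j)); d = (\<lambda>j. delta P (v j));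
             Q = real q - real c; L = loss u p d \<eta> \<gamma> Q;
             Bh = greedy A u p d \<eta> \<gamma> Q; E = UE A u p d \<eta> Q in
         E \<ge> 0 \<and> Min (L ` Pow A) \<le> L Bh \<and> L Bh \<le> Min (L ` Pow A) + E"
proof -
  have dp: "\<forall>j\<in>A. delta P (v j) \<ge> 0"
  proof
    fix j assume j: "j \<in> A"
    let ?X = "(\<lambda>t. P t (v j)) ` {0..1::real}"
    have vj: "v j \<in> {0..1}" using assms(3) j by blast
    have X: "?X \<subseteq> {0..1}" using assms(6) vj by auto
    have ba: "bdd_above ?X" using X by (intro bdd_aboveI[of _ 1]) auto
    have bb: "bdd_below ?X" using X by (intro bdd_belowI[of _ 0]) auto
    have "Inf ?X \<le> Sup ?X"
      by (rule cInf_le_cSup[OF _ ba bb]) simp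
    then show "delta P (v j) \<ge> 0" by (simp add: delta_def)
  qed
  have ug: "\<forall>j\<in>A. v j + e j < \<gamma>"
  proof
    fix j assume "j \<in> A"
    then have "v j + e j \<le> Max ((\<lambda>j. v j + e j) ` A)" using assms(1) by simp
    then show "v j + e j < \<gamma>" using assms(9) by simp
  qed
  show ?thesis unfolding Let_def
    apply (rule main)
    using assms dp ug by simp_all
qed

end
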